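(* Let $\Phi$ be an irreducible root system of rank $n$ with base $\Delta$, and let $\Psi$ be a simple subroot system of $\Phi$ with $m$ simple roots, where $1\le m<n$. Then $$\frac{n}{|\Phi|}<\frac{m}{|\Psi|},$$ where $|\Phi|$ and $|\Psi|$ denote the total numbers of roots.
   Context: A simple subroot system of $\Phi$ is a subset of the form $\Psi=\{a_1\alpha_1+\dots+a_m\alpha_m:a_i\in\mathbb{Z}\}\cap\Phi$ where $\{\alpha_1,\dots,\alpha_m\}\subseteq\Delta$; then $\{\alpha_1,\dots,\alpha_m\}$ is a base of $\Psi$ (its simple roots). *)

theory Defs
  imports "HOL-Analysis.Analysis"
begin

definition reflect :: "'a::euclidean_space \<Rightarrow> 'a \<Rightarrow> 'a" where
  "reflect \<alpha> \<beta> = \<beta> - (2 * (\<beta> \<bullet> \<alpha>) / (\<alpha> \<bullet> \<alpha>)) *\<^sub>R \<alpha>"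

definition root_system :: "'a::euclidean_space set \<Rightarrow> bool" where
  "root_system \<Phi> \<longleftrightarrow>
     finite \<Phi> \<and> 0 \<notin> \<Phi> \<and> span \<Phi> = UNIV \<and>
     (\<forall>\<alpha>\<in>\<Phi>. \<forall>c::real. c *\<^sub>R \<alpha> \<in> \<Phi> \<longrightarrow> c = 1 \<or> c = -1) \<and>
     (\<forall>\<alpha>\<in>\<Phi>. \<forall>\<beta>\<in>\<Phi>. reflect \<alpha> \<beta> \<in> \<Phi>) \<and>
     (\<forall>\<alpha>\<in>\<Phi>. \<forall>\<beta>\<in>\<Phi>. 2 * (\<beta> \<bullet> \<alpha>) / (\<alpha> \<bullet> \<alpha>) \<in> \<int>)"

definition irreducible_root_system :: "'a::euclidean_space set \<Rightarrow> bool" where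
  "irreducible_root_system \<Phi> \<longleftrightarrow> root_system \<Phi> \<and>
     \<not> (\<exists>A B. A \<union> B = \<Phi> \<and> A \<noteq> {} \<and> B \<noteq> {} \<and> (\<forall>a\<in>A. \<forall>b\<in>B. a \<bullet> b = 0))"

definition is_base :: "'a::euclidean_space set \<Rightarrow> 'a set \<Rightarrow> bool" where
  "is_base \<Phi> \<Delta> \<longleftrightarrow> \<Delta> \<subseteq> \<Phi> \<and> independent \<Delta> \<and> span \<Delta> = UNIV \<and>
     (\<forall>\<beta>\<in>\<Phi>. \<exists>c::'a \<Rightarrow> real. \<beta> = (\<Sum>\<alpha>\<in>\<Delta>. c \<alpha> *\<^sub>R \<alpha>) \<and> (\<forall>\<alpha>\<in>\<Delta>. c \<alpha> \<in> \<int>) \<and>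
        ((\<forall>\<alpha>\<in>\<Delta>. c \<alpha> \<ge> 0) \<or> (\<forall>\<alpha>\<in>\<Delta>. c \<alpha> \<le> 0)))"

definition int_span :: "'a::euclidean_space set \<Rightarrow> 'a set" where
  "int_span S = {v. \<exists>a::'a \<Rightarrow> int. v = (\<Sum>\<alpha>\<in>S. of_int (a \<alpha>) *\<^sub>R \<alpha>)}"

definition simple_subroot_system :: "'a::euclidean_space set \<Rightarrow> 'a set \<Rightarrow> 'a set" where
  "simple_subroot_system \<Phi> S = int_span S \<inter> \<Phi>"

end

theory Submission
  imports Defs
begin

definition TT :: "'a::euclidean_space set \<Rightarrow> 'a \<Rightarrow> 'a" where
  "TT \<Phi> v = (\<Sum>\<beta>\<in>\<Phi>. ((v \<bullet> \<beta>) / (\<beta> \<bullet> \<beta>)) *\<^sub>R \<beta>)"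

lemma linear_TT: "linear (TT \<Phi>)"
  unfolding TT_def linear_iff
  by (auto simp: inner_add_left add_divide_distrib scaleR_add_left sum.distrib scaleR_sum_right)

lemma reflect_invol: "\<alpha> \<noteq> 0 \<Longrightarrow> reflect \<alpha> (reflect \<alpha> \<beta>) = \<beta>"
  unfolding reflect_def by (simp add: inner_diff_left algebra_simps)

lemma reflect_inner: "\<alpha> \<noteq> 0 \<Longrightarrow> reflect \<alpha> x \<bullet> reflect \<alpha> y = x \<bullet> y"
  unfolding reflect_def by (simp add: inner_diff_left inner_diff_right algebra_simps inner_commute)

lemma linear_reflect: "linear (reflect \<alpha>)"
proof (rule linearI)
  fix x y :: 'a
  show "reflect \<alpha> (x + y) = reflect \<alpha> x + reflect \<alpha> y"
    unfolding reflect_def by (simp add: inner_add_left distrib_left add_divide_distrib scaleR_add_left)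
next
  fix c :: real and x :: 'a
  have "2 * (c * (x \<bullet> \<alpha>)) / (\<alpha> \<bullet> \<alpha>) = c * (2 * (x \<bullet> \<alpha>) / (\<alpha> \<bullet> \<alpha>))" by simp
  then show "reflect \<alpha> (c *\<^sub>R x) = c *\<^sub>R reflect \<alpha> x"
    unfolding reflect_def by (simp add: scaleR_diff_right)
qed

lemma TT_sym: "TT \<Phi> x \<bullet> y = x \<bullet> TT \<Phi> y"
  unfolding TT_def by (simp add: inner_sum_left inner_sum_right algebra_simps inner_commute)

lemma reflect_self: "\<alpha> \<noteq> 0 \<Longrightarrow> reflect \<alpha> \<alpha> = - \<alpha>"
  unfolding reflect_def by (simp add: scaleR_2)

lemma TT_reflect:
  assumes rs: "root_system \<Phi>" and a: "\<alpha> \<in> \<Phi>"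
  shows "TT \<Phi> (reflect \<alpha> v) = reflect \<alpha> (TT \<Phi> v)"
proof -
  have a0: "\<alpha> \<noteq> 0" using rs a unfolding root_system_def by auto
  have fin: "finite \<Phi>" using rs unfolding root_system_def by auto
  have into: "reflect \<alpha> ` \<Phi> \<subseteq> \<Phi>" using rs a unfolding root_system_def by auto
  have inj: "inj_on (reflect \<alpha>) \<Phi>"
    by (metis inj_onI reflect_invol a0)
  have img: "reflect \<alpha> ` \<Phi> = \<Phi>"
    using fin into inj by (meson card_image card_subset_eq finite_imageI)
  have "TT \<Phi> (reflect \<alpha> v) = (\<Sum>\<gamma>\<in>\<Phi>. ((reflect \<alpha> v \<bullet> reflect \<alpha> \<gamma>) / (reflect \<alpha> \<gamma> \<bullet> reflect \<alpha> \<gamma>)) *\<^sub>R reflect \<alpha> \<gamma>)"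
    unfolding TT_def
    by (subst img[symmetric], subst sum.reindex[OF inj]) (simp add: o_def)
  also have "\<dots> = (\<Sum>\<gamma>\<in>\<Phi>. reflect \<alpha> (((v \<bullet> \<gamma>) / (\<gamma> \<bullet> \<gamma>)) *\<^sub>R \<gamma>))"
    by (simp add: reflect_inner[OF a0] linear_scale[OF linear_reflect])
  also have "\<dots> = reflect \<alpha> (TT \<Phi> v)"
    unfolding TT_def by (simp add: linear_sum[OF linear_reflect])
  finally show ?thesis .
qed

lemma TT_root:
  assumes rs: "root_system \<Phi>" and a: "\<alpha> \<in> \<Phi>"
  shows "TT \<Phi> \<alpha> = ((TT \<Phi> \<alpha> \<bullet> \<alpha>) / (\<alpha> \<bullet> \<alpha>)) *\<^sub>R \<alpha>"
proof -
  have a0: "\<alpha> \<noteq> 0" using rs a unfolding root_system_def by auto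
  have "TT \<Phi> (- \<alpha>) = reflect \<alpha> (TT \<Phi> \<alpha>)"
    using TT_reflect[OF rs a, of \<alpha>] reflect_self[OF a0] by simp
  moreover have "TT \<Phi> (- \<alpha>) = - TT \<Phi> \<alpha>" by (simp add: linear_neg[OF linear_TT])
  ultimately have "- TT \<Phi> \<alpha> = TT \<Phi> \<alpha> - (2 * (TT \<Phi> \<alpha> \<bullet> \<alpha>) / (\<alpha> \<bullet> \<alpha>)) *\<^sub>R \<alpha>"
    unfolding reflect_def by simp
  then have "2 *\<^sub>R TT \<Phi> \<alpha> = (2 * (TT \<Phi> \<alpha> \<bullet> \<alpha>) / (\<alpha> \<bullet> \<alpha>)) *\<^sub>R \<alpha>"
    by (simp add: algebra_simps scaleR_2)
  then have "(1/2::real) *\<^sub>R (2 *\<^sub>R TT \<Phi> \<alpha>) = (1/2::real) *\<^sub>R ((2 * (TT \<Phi> \<alpha> \<bullet> \<alpha>) / (\<alpha> \<bullet> \<alpha>)) *\<^sub>R \<alpha>)"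
    by simp
  then show ?thesis by simp
qed


lemma TT_const:
  assumes irr: "irreducible_root_system (\<Phi>::'a::euclidean_space set)"
  shows "\<exists>c. \<forall>v. TT \<Phi> v = c *\<^sub>R v"
proof -
  have rs: "root_system \<Phi>" using irr unfolding irreducible_root_system_def by auto
  have sp: "span \<Phi> = UNIV" using rs unfolding root_system_def by auto
  have ne: "\<Phi> \<noteq> {}"
  proof
    assume "\<Phi> = {}"
    then have "(UNIV::'a set) = {0}" using sp by simp
    moreover obtain b :: 'a where "b \<in> Basis" using nonempty_Basis by blast
    ultimately show False using nonzero_Basis by auto
  qed
  then obtain a0 where a0: "a0 \<in> \<Phi>" by auto
  define l where "l \<beta> = (TT \<Phi> \<beta> \<bullet> \<beta>) / (\<beta> \<bullet> \<beta>)" for \<beta>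
  have Tl: "TT \<Phi> \<beta> = l \<beta> *\<^sub>R \<beta>" if "\<beta> \<in> \<Phi>" for \<beta>
    using TT_root[OF rs that] unfolding l_def .
  define A where "A = {\<beta>\<in>\<Phi>. l \<beta> = l a0}"
  define B where "B = \<Phi> - A"
  have orth: "\<forall>a\<in>A. \<forall>b\<in>B. a \<bullet> b = 0"
  proof (intro ballI)
    fix a b assume aA: "a \<in> A" and bB: "b \<in> B"
    show "a \<bullet> b = 0"
    proof (rule ccontr)
      assume nz: "a \<bullet> b \<noteq> 0"
      have "TT \<Phi> a \<bullet> b = a \<bullet> TT \<Phi> b" by (rule TT_sym)
      then have "l a * (a \<bullet> b) = l b * (a \<bullet> b)"
        using Tl aA bB unfolding A_def B_def by auto
      then have "l a = l b" using nz by simp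
      then show False using aA bB unfolding A_def B_def by auto
    qed
  qed
  have "A \<union> B = \<Phi>" "A \<noteq> {}" unfolding A_def B_def using a0 by auto
  then have "B = {}" using irr orth unfolding irreducible_root_system_def by blast
  then have "\<forall>\<beta>\<in>\<Phi>. TT \<Phi> \<beta> = l a0 *\<^sub>R \<beta>" using Tl unfolding A_def B_def by auto
  then have "TT \<Phi> v = l a0 *\<^sub>R v" for v
    using linear_eq_on_span[OF linear_TT linear_scale_self[of "l a0"], where B=\<Phi> and x=v] sp by auto
  then show ?thesis by blast
qed


theorem lemma3:
  fixes \<Phi> \<Delta> S :: "'a::euclidean_space set" and n m :: nat
  assumes "irreducible_root_system \<Phi>"
    and "is_base \<Phi> \<Delta>"
    and "n = DIM('a)"
    and "S \<subseteq> \<Delta>"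
    and "m = card S"
    and "1 \<le> m" and "m < n"
  shows "real n / real (card \<Phi>) < real m / real (card (simple_subroot_system \<Phi> S))"
proof -
  note irr = assms(1)
  have rs: "root_system \<Phi>" using irr unfolding irreducible_root_system_def by auto
  have fin: "finite \<Phi>" and sp: "span \<Phi> = UNIV" and nz: "0 \<notin> \<Phi>"
    using rs unfolding root_system_def by auto
  have pos: "\<beta> \<bullet> \<beta> > 0" if "\<beta> \<in> \<Phi>" for \<beta>
    using nz that by (metis inner_gt_zero_iff)
  obtain c where c: "\<And>v. TT \<Phi> v = c *\<^sub>R v" using TT_const[OF irr] by blast
  have SPhi: "S \<subseteq> \<Phi>" using assms(2,4) unfolding is_base_def by auto
  have indS: "independent S" using assms(2,4) unfolding is_base_def
    using independent_mono by blast
  have finS: "finite S" using SPhi fin finite_subset by blast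
  have Sne: "S \<noteq> {}" using assms(5,6) by auto
  define U where "U = span S"
  have dimU: "dim U = m" unfolding U_def using dim_span_eq_card_independent[OF indS] assms(5) by simp
  have TTin: "TT \<Phi> x \<bullet> x = (\<Sum>\<beta>\<in>\<Phi>. (x \<bullet> \<beta>) * (x \<bullet> \<beta>) / (\<beta> \<bullet> \<beta>))" for x
    unfolding TT_def by (simp add: inner_sum_left inner_sum_right inner_commute)
  have tr1: "(\<Sum>i\<in>Basis. TT \<Phi> i \<bullet> i) = real (card \<Phi>)"
  proof -
    have "(\<Sum>i\<in>Basis. TT \<Phi> i \<bullet> i) = (\<Sum>\<beta>\<in>\<Phi>. (\<Sum>i\<in>Basis. (i \<bullet> \<beta>) * (i \<bullet> \<beta>)) / (\<beta> \<bullet> \<beta>))"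
      unfolding TTin by (subst sum.swap) (simp add: sum_divide_distrib)
    also have "\<dots> = (\<Sum>\<beta>\<in>\<Phi>. 1)"
    proof (rule sum.cong[OF refl])
      fix \<beta> assume b: "\<beta> \<in> \<Phi>"
      have "(\<Sum>i\<in>Basis. (i \<bullet> \<beta>) * (i \<bullet> \<beta>)) = \<beta> \<bullet> \<beta>"
        by (subst (2) euclidean_inner) (simp add: inner_commute)
      then show "(\<Sum>i\<in>Basis. (i \<bullet> \<beta>) * (i \<bullet> \<beta>)) / (\<beta> \<bullet> \<beta>) = 1" using pos[OF b] by simp
    qed
    finally show ?thesis by simp
  qed
  have "(\<Sum>i\<in>Basis. TT \<Phi> i \<bullet> i) = c * real n"
    using assms(3) by (simp add: c)
  then have cn: "c * real n = real (card \<Phi>)" using tr1 by simp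
  obtain Bo where BoU: "Bo \<subseteq> U" and Bort: "pairwise orthogonal Bo"
      and Bn: "\<And>x. x \<in> Bo \<Longrightarrow> norm x = 1" and Bind: "independent Bo"
      and Bcard: "card Bo = dim U" and Bspan: "span Bo = U"
    using orthonormal_basis_subspace[of U] unfolding U_def by (metis subspace_span)
  have finBo: "finite Bo" using Bind finiteI_independent by blast
  define g where "g \<beta> = (\<Sum>b\<in>Bo. (b \<bullet> \<beta>) * (b \<bullet> \<beta>)) / (\<beta> \<bullet> \<beta>)" for \<beta>
  have tr2: "(\<Sum>b\<in>Bo. TT \<Phi> b \<bullet> b) = (\<Sum>\<beta>\<in>\<Phi>. g \<beta>)"
    unfolding TTin g_def by (subst sum.swap) (simp add: sum_divide_distrib)
  have "(\<Sum>b\<in>Bo. TT \<Phi> b \<bullet> b) = c * real m"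
  proof -
    have "(\<Sum>b\<in>Bo. TT \<Phi> b \<bullet> b) = (\<Sum>b\<in>Bo. c)"
      using Bn by (simp add: c norm_eq_1)
    then show ?thesis using Bcard dimU by simp
  qed
  then have cm: "(\<Sum>\<beta>\<in>\<Phi>. g \<beta>) = c * real m" using tr2 by simp
  have gU: "g \<beta> = 1" if "\<beta> \<in> \<Phi>" "\<beta> \<in> U" for \<beta>
  proof -
    have "(\<Sum>i\<in>Bo. (\<beta> \<bullet> i) *\<^sub>R i) = \<beta>"
      using orthonormal_basis_expand[OF Bort Bn _ finBo] that Bspan by auto
    then have "\<beta> \<bullet> \<beta> = \<beta> \<bullet> (\<Sum>i\<in>Bo. (\<beta> \<bullet> i) *\<^sub>R i)" by simp
    also have "\<dots> = (\<Sum>b\<in>Bo. (b \<bullet> \<beta>) * (b \<bullet> \<beta>))"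
      by (simp add: inner_sum_right inner_commute)
    finally show ?thesis unfolding g_def using pos[OF that(1)] by simp
  qed
  have g0: "g \<beta> \<ge> 0" if "\<beta> \<in> \<Phi>" for \<beta>
    unfolding g_def using pos[OF that] by (intro divide_nonneg_pos sum_nonneg) auto
  obtain \<beta>0 where b0: "\<beta>0 \<in> \<Phi>" "\<beta>0 \<notin> U" "g \<beta>0 > 0"
  proof -
    have Ane: "\<Phi> \<inter> U \<noteq> {}" using Sne SPhi span_base unfolding U_def by blast
    have Bne: "\<Phi> - U \<noteq> {}"
    proof
      assume "\<Phi> - U = {}"
      then have "\<Phi> \<subseteq> U" by auto
      then have "span \<Phi> \<subseteq> U" unfolding U_def by (simp add: span_minimal)
      then have "U = UNIV" using sp by auto
      then have "dim U = n" using assms(3) by simp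
      then show False using dimU assms(7) by simp
    qed
    have "(\<Phi> \<inter> U) \<union> (\<Phi> - U) = \<Phi>" by auto
    then obtain a b where ab: "a \<in> \<Phi> \<inter> U" "b \<in> \<Phi> - U" "a \<bullet> b \<noteq> 0"
      using irr Ane Bne unfolding irreducible_root_system_def by metis
    have "g b > 0"
    proof (rule ccontr)
      assume "\<not> g b > 0"
      then have "g b = 0" using g0[of b] ab by auto
      then have "(\<Sum>x\<in>Bo. (x \<bullet> b) * (x \<bullet> b)) = 0" unfolding g_def using pos[of b] ab by auto
      then have "\<forall>x\<in>Bo. (x \<bullet> b) * (x \<bullet> b) = 0"
        using sum_nonneg_eq_0_iff[OF finBo, of "\<lambda>x. (x \<bullet> b) * (x \<bullet> b)"] by auto
      then have "\<And>y. y \<in> Bo \<Longrightarrow> orthogonal b y" by (auto simp: orthogonal_def inner_commute)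
      then have "orthogonal b a" using orthogonal_to_span[of a Bo b] ab Bspan by auto
      then show False using ab by (simp add: orthogonal_def inner_commute)
    qed
    then show ?thesis using that ab by auto
  qed
  have "(\<Sum>\<beta>\<in>\<Phi>. g \<beta>) = (\<Sum>\<beta>\<in>\<Phi> \<inter> U. g \<beta>) + (\<Sum>\<beta>\<in>\<Phi> - U. g \<beta>)"
    using fin by (metis Int_Diff_Un Int_Diff_disjoint finite_Int finite_Diff sum.union_disjoint)
  moreover have "(\<Sum>\<beta>\<in>\<Phi> \<inter> U. g \<beta>) = real (card (\<Phi> \<inter> U))" using gU by simp
  moreover have "(\<Sum>\<beta>\<in>\<Phi> - U. g \<beta>) \<ge> g \<beta>0"
    using b0 fin g0 by (intro member_le_sum) auto
  ultimately have lt: "real (card (\<Phi> \<inter> U)) < c * real m" using cm b0 by linarith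
  have Psub: "simple_subroot_system \<Phi> S \<subseteq> \<Phi> \<inter> U"
    unfolding simple_subroot_system_def int_span_def U_def
    by (auto intro!: span_sum span_scale intro: span_base)
  have finP: "finite (simple_subroot_system \<Phi> S)"
    using fin unfolding simple_subroot_system_def by auto
  have cardle: "card (simple_subroot_system \<Phi> S) \<le> card (\<Phi> \<inter> U)"
    using Psub fin by (intro card_mono) auto
  have SinP: "S \<subseteq> simple_subroot_system \<Phi> S"
  proof
    fix s assume s: "s \<in> S"
    have "s = (\<Sum>\<alpha>\<in>S. of_int (if \<alpha> = s then 1 else 0) *\<^sub>R \<alpha>)"
    proof -
      have "(\<Sum>\<alpha>\<in>S. of_int (if \<alpha> = s then 1 else 0) *\<^sub>R \<alpha>) = (\<Sum>\<alpha>\<in>S. if \<alpha> = s then \<alpha> else 0)"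
        by (rule sum.cong) auto
      also have "\<dots> = s" using finS s by (simp add: sum.delta)
      finally show ?thesis by simp
    qed
    then show "s \<in> simple_subroot_system \<Phi> S"
      unfolding simple_subroot_system_def int_span_def
    proof (intro IntI CollectI)
      show "s \<in> \<Phi>" using s SPhi by auto
      show "\<exists>a::'a \<Rightarrow> int. s = (\<Sum>\<alpha>\<in>S. of_int (a \<alpha>) *\<^sub>R \<alpha>)"
        by (rule exI[of _ "\<lambda>\<alpha>. if \<alpha> = s then 1 else (0::int)"]) fact
    qed
  qed
  have Ppos: "card (simple_subroot_system \<Phi> S) > 0"
    using SinP Sne finP by (metis card_gt_0_iff subset_empty)
  have Phipos: "card \<Phi> > 0" using SPhi Sne fin by (metis card_gt_0_iff subset_empty)
  have npos: "n > 0" using assms(6,7) by simp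
  have key: "real (card (simple_subroot_system \<Phi> S)) < c * real m"
    using cardle lt by (meson of_nat_le_iff order_le_less_trans)
  have "real n * real (card (simple_subroot_system \<Phi> S)) < real n * (c * real m)"
    using key npos by simp
  also have "\<dots> = real m * real (card \<Phi>)" using cn by (simp add: algebra_simps)
  finally show ?thesis using Ppos Phipos by (simp add: divide_simps)
qed

end
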